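(* Let $(M,d)$ be a compact metric space and $\varphi:M\to M$ continuous with $h_{\rm Top}(\varphi)<\infty$ and $\mathbb Q\mapsto h_\varphi(\mathbb Q)$ upper semicontinuous on $\mathcal P_\varphi(M)$. Let $\mathbb P\in\mathcal P(M)$ be a weak Gibbs measure for $\mathcal G\in\mathcal A(M)$. Then for every $\mathcal G'=\{G_n'\}\in\mathcal A(M)$, $$\lim_{n\to\infty}\frac1n\log\int_Me^{G_n'}\,d\mathbb P=\mathfrak p_\varphi(\mathcal G+\mathcal G')-\mathfrak p_\varphi(\mathcal G).$$
   Context: $C(M),B(M)$: continuous/bounded Borel real functions, sup norm; $\mathcal P_\varphi(M)$ invariant Borel probability measures; $h_\varphi$ Kolmogorov–Sinai entropy, $h_{\rm Top}$ topological entropy; $S_nG=\sum_{k<n}G\circ\varphi^k$; $B_n(x,\epsilon)=\{y:d(\varphi^ky,\varphi^kx)<\epsilon,0\le k<n\}$. $\mathcal A(M)$: $\{G_n\}\subset B(M)$ such that some $\{G^{(k)}\}\subset C(M)$ has $\lim_k\limsup_nn^{-1}\|G_n-S_nG^{(k)}\|_\infty=0$; sums termwise. Pressure $\mathfrak p_\varphi(\mathcal G)=\lim_{\epsilon\downarrow0}\limsup_nn^{-1}\log\inf\{\sum_{x\in E}e^{G_n(x)}:E\text{ finite},\bigcup_{x\in E}B_n(x,\epsilon)=M\}$. Weak Gibbs for $\mathcal G$: for every $n\ge1,\epsilon>0$ there is $K_n(\epsilon)\ge1$ with $K_n(\epsilon)^{-1}e^{G_n(x)-n\mathfrak p_\varphi(\mathcal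 G)}\le\mathbb P(B_n(x,\epsilon))\le K_n(\epsilon)e^{G_n(x)-n\mathfrak p_\varphi(\mathcal G)}$ for every $x\in M$, and $\lim_{\epsilon\downarrow0}\limsup_nn^{-1}\log K_n(\epsilon)=0$. *)

theory Defs
  imports "HOL-Probability.Probability"
begin

text \<open>The compact metric space M is the whole (compact) type 'a; the map is phi.\<close>

definition bowen_ball :: "('a::metric_space \<Rightarrow> 'a) \<Rightarrow> nat \<Rightarrow> 'a \<Rightarrow> real \<Rightarrow> 'a set" where
  "bowen_ball phi n x eps = {y. \<forall>k<n. dist ((phi ^^ k) y) ((phi ^^ k) x) < eps}"

definition birkhoff_sum :: "('a \<Rightarrow> 'a) \<Rightarrow> ('a \<Rightarrow> real) \<Rightarrow> nat \<Rightarrow> 'a \<Rightarrow> real" where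
  "birkhoff_sum phi G n x = (\<Sum>k<n. G ((phi ^^ k) x))"

definition sup_norm :: "('a \<Rightarrow> real) \<Rightarrow> real" where
  "sup_norm f = (SUP x. \<bar>f x\<bar>)"

definition bounded_borel :: "('a::metric_space \<Rightarrow> real) \<Rightarrow> bool" where
  "bounded_borel f \<longleftrightarrow> f \<in> borel_measurable borel \<and> bounded (range f)"

definition class_A :: "('a::metric_space \<Rightarrow> 'a) \<Rightarrow> (nat \<Rightarrow> 'a \<Rightarrow> real) \<Rightarrow> bool" where
  "class_A phi Gs \<longleftrightarrow> (\<forall>n. bounded_borel (Gs n)) \<and>
     (\<exists>Gk :: nat \<Rightarrow> 'a \<Rightarrow> real. (\<forall>k. continuous_on UNIV (Gk k)) \<and>
        ((\<lambda>k. limsup (\<lambda>n. ereal (sup_norm (\<lambda>x. Gs n x - birkhoff_sum phi (Gk k) n x) / real n)))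
          \<longlonglongrightarrow> 0))"

definition bowen_covers :: "('a::metric_space \<Rightarrow> 'a) \<Rightarrow> nat \<Rightarrow> real \<Rightarrow> 'a set set" where
  "bowen_covers phi n eps = {E. finite E \<and> (\<Union>x\<in>E. bowen_ball phi n x eps) = UNIV}"

definition pressure :: "('a::metric_space \<Rightarrow> 'a) \<Rightarrow> (nat \<Rightarrow> 'a \<Rightarrow> real) \<Rightarrow> ereal" where
  "pressure phi Gs = Lim (at_right 0) (\<lambda>eps::real.
      limsup (\<lambda>n. ereal (ln (Inf {\<Sum>x\<in>E. exp (Gs n x) | E. E \<in> bowen_covers phi n eps}) / real n)))"

definition top_entropy :: "('a::metric_space \<Rightarrow> 'a) \<Rightarrow> ereal" where
  "top_entropy phi = Lim (at_right 0) (\<lambda>eps::real.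
      limsup (\<lambda>n. ereal (ln (real (Inf {card E | E. E \<in> bowen_covers phi n eps})) / real n)))"

definition borel_prob :: "'a::metric_space measure \<Rightarrow> bool" where
  "borel_prob Q \<longleftrightarrow> prob_space Q \<and> sets Q = sets borel"

definition invariant_prob :: "('a::metric_space \<Rightarrow> 'a) \<Rightarrow> 'a measure \<Rightarrow> bool" where
  "invariant_prob phi Q \<longleftrightarrow> borel_prob Q \<and> phi \<in> measurable Q Q \<and> distr Q Q phi = Q"

text \<open>A finite measurable partition is encoded by a measurable
  labelling xi with finite range (cells are the fibres); the join of
  xi, xi o phi, ..., xi o phi^(n-1) is encoded by the list of labels.\<close>
definition partition_entropy :: "'a measure \<Rightarrow> ('a \<Rightarrow> 'b) \<Rightarrow> real" where
  "partition_entropy Q f = - (\<Sum>w\<in>range f. measure Q (f -` {w}) * ln (measure Q (f -` {w})))"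

definition join_labels :: "('a \<Rightarrow> 'a) \<Rightarrow> ('a \<Rightarrow> nat) \<Rightarrow> nat \<Rightarrow> 'a \<Rightarrow> nat list" where
  "join_labels phi xi n x = map (\<lambda>k. xi ((phi ^^ k) x)) [0..<n]"

definition ks_entropy :: "('a::metric_space \<Rightarrow> 'a) \<Rightarrow> 'a measure \<Rightarrow> ereal" where
  "ks_entropy phi Q = (SUP xi \<in> {xi :: 'a \<Rightarrow> nat. xi \<in> measurable borel (count_space UNIV) \<and> finite (range xi)}.
      ereal (lim (\<lambda>n. partition_entropy Q (join_labels phi xi n) / real n)))"

text \<open>Weak convergence of Borel probability measures and upper semicontinuity of the
  entropy map on the invariant measures (M compact metric, so the weak topology on P(M)
  is metrizable and sequential upper semicontinuity is upper semicontinuity).\<close>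
definition weak_conv :: "(nat \<Rightarrow> 'a::metric_space measure) \<Rightarrow> 'a measure \<Rightarrow> bool" where
  "weak_conv Qs Q \<longleftrightarrow> (\<forall>f :: 'a \<Rightarrow> real. continuous_on UNIV f \<and> bounded (range f) \<longrightarrow>
      (\<lambda>k. integral\<^sup>L (Qs k) f) \<longlonglongrightarrow> integral\<^sup>L Q f)"

definition entropy_usc :: "('a::metric_space \<Rightarrow> 'a) \<Rightarrow> bool" where
  "entropy_usc phi \<longleftrightarrow> (\<forall>Qs Q. (\<forall>k. invariant_prob phi (Qs k)) \<and> invariant_prob phi Q \<and> weak_conv Qs Q
      \<longrightarrow> limsup (\<lambda>k. ks_entropy phi (Qs k)) \<le> ks_entropy phi Q)"

text \<open>Weak Gibbs measure for Gs (pressure required to be a real number, as the definition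
  uses n times the pressure).\<close>
definition weak_gibbs :: "('a::metric_space \<Rightarrow> 'a) \<Rightarrow> (nat \<Rightarrow> 'a \<Rightarrow> real) \<Rightarrow> 'a measure \<Rightarrow> bool" where
  "weak_gibbs phi Gs P \<longleftrightarrow> borel_prob P \<and> \<bar>pressure phi Gs\<bar> \<noteq> \<infinity> \<and>
     (\<exists>K :: nat \<Rightarrow> real \<Rightarrow> real.
        (\<forall>n\<ge>1. \<forall>eps>0. K n eps \<ge> 1 \<and>
           (\<forall>x. exp (Gs n x - real n * real_of_ereal (pressure phi Gs)) / K n eps
                  \<le> measure P (bowen_ball phi n x eps)
              \<and> measure P (bowen_ball phi n x eps)
                  \<le> K n eps * exp (Gs n x - real n * real_of_ereal (pressure phi Gs)))) \<and>
        ((\<lambda>eps. limsup (\<lambda>n. ereal (ln (K n eps) / real n))) \<longlongrightarrow> 0) (at_right 0))"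

end

theory Submission
  imports Defs
begin

lemma abstract_limit:
  fixes c :: "nat \<Rightarrow> real" and z :: "real \<Rightarrow> nat \<Rightarrow> real" and p :: real
  assumes fek: "\<And>\<delta>. \<delta>>0 \<Longrightarrow> \<exists>N. \<forall>m\<ge>N. eventually (\<lambda>n. c n \<le> c m + \<delta>) sequentially"
  and bnd: "\<exists>C N. \<forall>n\<ge>N. \<bar>c n\<bar> \<le> C"
  and close: "\<And>\<delta>. \<delta>>0 \<Longrightarrow> \<exists>e0>0. \<forall>e. 0<e \<and> e<e0 \<longrightarrow> eventually (\<lambda>n. \<bar>c n + p - z e n\<bar> \<le> \<delta>) sequentially"
  shows "(\<lambda>n. ereal (c n)) \<longlonglongrightarrow> Lim (at_right 0) (\<lambda>e. limsup (\<lambda>n. ereal (z e n))) - ereal p"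
proof -
  obtain C N0 where CN: "\<forall>n\<ge>N0. \<bar>c n\<bar> \<le> C" using bnd by blast
  define lsup where "lsup = limsup (\<lambda>n. ereal (c n))"
  have ev1: "eventually (\<lambda>n. ereal (c n) \<le> ereal C) sequentially"
    using CN by (auto simp: eventually_sequentially abs_le_iff intro!: exI[of _ N0])
  have ev2: "eventually (\<lambda>n. ereal (-C) \<le> ereal (c n)) sequentially"
    using CN by (auto simp: eventually_sequentially abs_le_iff intro!: exI[of _ N0])
  have "lsup \<le> ereal C" unfolding lsup_def by (rule Limsup_bounded[OF ev1])
  moreover have "ereal (-C) \<le> lsup" unfolding lsup_def by (rule le_Limsup[OF _ ev2]) simp
  ultimately obtain L where L: "lsup = ereal L" by (cases lsup) auto
  have liminf: "ereal L \<le> liminf (\<lambda>n. ereal (c n))"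
  proof (rule ereal_le_epsilon2)
    fix \<delta> :: real assume d: "0 < \<delta>"
    obtain N where N: "\<forall>m\<ge>N. eventually (\<lambda>n. c n \<le> c m + \<delta>) sequentially" using fek[OF d] by blast
    have "\<forall>m\<ge>N. ereal (L - \<delta>) \<le> ereal (c m)"
    proof (intro allI impI)
      fix m assume "m \<ge> N"
      then have "eventually (\<lambda>n. ereal (c n) \<le> ereal (c m + \<delta>)) sequentially"
        using N by (auto elim: eventually_mono)
      then have "lsup \<le> ereal (c m + \<delta>)" unfolding lsup_def by (rule Limsup_bounded)
      then show "ereal (L - \<delta>) \<le> ereal (c m)" using L by simp
    qed
    then have "ereal (L - \<delta>) \<le> liminf (\<lambda>n. ereal (c n))"
      by (intro Liminf_bounded) (auto simp: eventually_sequentially)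
    then show "ereal L \<le> liminf (\<lambda>n. ereal (c n)) + ereal \<delta>"
      by (cases "liminf (\<lambda>n. ereal (c n))") auto
  qed
  have lim: "(\<lambda>n. ereal (c n)) \<longlonglongrightarrow> ereal L"
  proof (rule Liminf_eq_Limsup)
    show "liminf (\<lambda>n. ereal (c n)) = ereal L"
      using liminf Liminf_le_Limsup[of sequentially "\<lambda>n. ereal (c n)"] L lsup_def by simp
  qed (use L lsup_def in auto)
  then have limr: "c \<longlonglongrightarrow> L" by simp
  define f where "f = (\<lambda>e. limsup (\<lambda>n. ereal (z e n)))"
  have bounds: "eventually (\<lambda>e. ereal (L + p - 2*\<delta>) \<le> f e \<and> f e \<le> ereal (L + p + 2*\<delta>)) (at_right 0)"
    if d: "\<delta> > 0" for \<delta>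
  proof -
    obtain e0 where e0: "e0 > 0" "\<forall>e. 0<e \<and> e<e0 \<longrightarrow> eventually (\<lambda>n. \<bar>c n + p - z e n\<bar> \<le> \<delta>) sequentially"
      using close[OF d] by blast
    have cc: "eventually (\<lambda>n. \<bar>c n - L\<bar> < \<delta>) sequentially"
      using limr d by (simp add: tendsto_iff dist_real_def)
    have "eventually (\<lambda>e. e < e0) (at_right 0)"
      using eventually_at_right_real[OF e0(1)] by (rule eventually_mono) simp
    moreover have "eventually (\<lambda>e. 0 < e) (at_right (0::real))" by (rule eventually_at_right_less)
    ultimately show ?thesis
    proof eventually_elim
      case (elim e)
      then have ev: "eventually (\<lambda>n. \<bar>c n + p - z e n\<bar> \<le> \<delta> \<and> \<bar>c n - L\<bar> < \<delta>) sequentially"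
        using e0 cc eventually_conj by blast
      have "f e \<le> ereal (L + p + 2*\<delta>)" unfolding f_def
        by (rule Limsup_bounded) (use ev in \<open>auto elim!: eventually_mono\<close>)
      moreover have "ereal (L + p - 2*\<delta>) \<le> f e" unfolding f_def
        by (rule le_Limsup) (use ev in \<open>auto elim!: eventually_mono\<close>)
      ultimately show ?case by simp
    qed
  qed
  have ftend: "(f \<longlongrightarrow> ereal (L + p)) (at_right 0)"
  proof (rule order_tendstoI)
    fix a assume "ereal (L + p) < a"
    then obtain r where r: "ereal (L+p) < ereal r" "ereal r < a" using ereal_dense2 by blast
    define \<delta> where "\<delta> = (r - (L+p))/4"
    have d: "\<delta> > 0" using r(1) by (simp add: \<delta>_def)
    show "eventually (\<lambda>e. f e < a) (at_right 0)"
      using bounds[OF d] proof eventually_elim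
      case (elim e)
      then have "f e \<le> ereal (L+p+2*\<delta>)" by simp
      also have "\<dots> < ereal r" using r(1) by (simp add: \<delta>_def field_simps)
      finally show ?case using r(2) by simp
    qed
  next
    fix a assume "a < ereal (L + p)"
    then obtain r where r: "a < ereal r" "ereal r < ereal (L+p)" using ereal_dense2 by blast
    define \<delta> where "\<delta> = ((L+p) - r)/4"
    have d: "\<delta> > 0" using r(2) by (simp add: \<delta>_def)
    show "eventually (\<lambda>e. a < f e) (at_right 0)"
      using bounds[OF d] proof eventually_elim
      case (elim e)
      have "ereal r < ereal (L+p-2*\<delta>)" using r(2) by (simp add: \<delta>_def field_simps)
      also have "\<dots> \<le> f e" using elim by simp
      finally show ?case using r(1) by simp
    qed
  qed
  have "Lim (at_right 0) f = ereal (L + p)"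
    by (rule tendsto_Lim[OF _ ftend]) simp
  then show ?thesis using lim unfolding f_def by simp
qed

lemma arith_fek:
  fixes An Am q m n d C :: real
  assumes h: "An \<le> q*Am + 11*(q*(m*d)) + m*C + 2*(n*d)" and qm: "q*m \<le> n" "n < q*m + m"
    and m: "m > 0" and d: "d > 0" and n: "n > 0" and big: "m*(\<bar>Am/m\<bar> + \<bar>C\<bar>) \<le> n*d" and q: "q \<ge> 0"
  shows "An/n \<le> Am/m + 14*d"
proof -
  define a where "a = Am/m"
  have 1: "q*Am = (q*m)*a" unfolding a_def using m by simp
  have "\<bar>(q*m - n)*a\<bar> = \<bar>q*m - n\<bar> * \<bar>a\<bar>" by (rule abs_mult)
  also have "\<dots> \<le> m * \<bar>a\<bar>" using qm by (intro mult_right_mono) auto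
  finally have 2: "(q*m)*a \<le> n*a + m*\<bar>a\<bar>" by (simp add: algebra_simps abs_le_iff)
  have 3: "11*(q*(m*d)) \<le> 11*(n*d)" using qm d by (simp add: mult.assoc[symmetric])
  have 4: "m*C \<le> m*\<bar>C\<bar>" using m by (intro mult_left_mono) auto
  have 5: "m*\<bar>a\<bar> + m*\<bar>C\<bar> \<le> n*d" using big unfolding a_def by (simp add: algebra_simps)
  have "An \<le> n*a + 14*(n*d)" using h 1 2 3 4 5 by linarith
  then have "An \<le> (a + 14*d) * n" by (simp add: algebra_simps)
  then show ?thesis unfolding a_def[symmetric] using n by (simp add: pos_divide_le_eq)
qed

locale dyn =
  fixes phi :: "'a::metric_space \<Rightarrow> 'a" and P :: "'a measure"
  assumes cpt: "compact (UNIV::'a set)" and cont: "continuous_on UNIV phi" and bp: "borel_prob P"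
begin

lemma prob: "prob_space P" using bp by (simp add: borel_prob_def)
lemma setsP: "sets P = sets borel" using bp by (simp add: borel_prob_def)

lemma cont_funpow: "continuous_on UNIV (phi ^^ k)"
proof (induction k)
  case 0 then show ?case by (simp add: continuous_on_id)
next
  case (Suc k)
  have "phi ^^ Suc k = phi \<circ> (phi ^^ k)" by simp
  then show ?case using continuous_on_compose[OF Suc] cont
    by (metis continuous_on_subset top_greatest)
qed

lemma bowen_Inter: "bowen_ball phi n x e = (\<Inter>k\<in>{..<n}. {y. dist ((phi ^^ k) y) ((phi ^^ k) x) < e})"
  unfolding bowen_ball_def by auto

lemma open_bowen: "open (bowen_ball phi n x e)"
proof -
  have "open {y. dist ((phi ^^ k) y) ((phi ^^ k) x) < e}" for k
    by (rule open_Collect_less) (intro continuous_intros cont_funpow)+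
  then show ?thesis unfolding bowen_Inter by (intro open_INT) auto
qed

lemma bowen_sets: "bowen_ball phi n x e \<in> sets P"
  using open_bowen setsP by simp

lemma bowen_center: "e > 0 \<Longrightarrow> x \<in> bowen_ball phi n x e"
  by (simp add: bowen_ball_def)

lemma bowen_sym: "y \<in> bowen_ball phi n x e \<longleftrightarrow> x \<in> bowen_ball phi n y e"
  by (simp add: bowen_ball_def dist_commute)

lemma bowen_tri: "y \<in> bowen_ball phi n x e \<Longrightarrow> z \<in> bowen_ball phi n x e' \<Longrightarrow> z \<in> bowen_ball phi n y (e+e')"
  unfolding bowen_ball_def
proof (intro CollectI allI impI)
  fix k assume y: "y \<in> {y. \<forall>k<n. dist ((phi ^^ k) y) ((phi ^^ k) x) < e}"
    and z: "z \<in> {y. \<forall>k<n. dist ((phi ^^ k) y) ((phi ^^ k) x) < e'}" and k: "k < n"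
  have "dist ((phi ^^ k) z) ((phi ^^ k) y) \<le> dist ((phi ^^ k) z) ((phi ^^ k) x) + dist ((phi ^^ k) y) ((phi ^^ k) x)"
    by (rule dist_triangle2)
  also have "\<dots> < e' + e" using y z k by (intro add_strict_mono) auto
  finally show "dist ((phi ^^ k) z) ((phi ^^ k) y) < e + e'" by simp
qed

lemma finite_cover_exists:
  assumes "e > 0" obtains E where "finite E" "(\<Union>x\<in>E. bowen_ball phi n x e) = UNIV"
proof -
  have h: "UNIV \<subseteq> (\<Union>x\<in>UNIV. bowen_ball phi n x e)" using bowen_center[OF assms] by blast
  obtain E where "finite E" "UNIV \<subseteq> (\<Union>x\<in>E. bowen_ball phi n x e)"
    by (rule compactE_image[OF cpt, of UNIV "\<lambda>x. bowen_ball phi n x e", OF open_bowen h])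
  then show ?thesis by (intro that) (assumption, rule subset_antisym[OF subset_UNIV])
qed

lemma covers_ne: assumes "e > 0" shows "bowen_covers phi n e \<noteq> {}"
proof -
  obtain E where E: "finite E" "(\<Union>x\<in>E. bowen_ball phi n x e) = UNIV"
    by (rule finite_cover_exists[OF assms])
  then have "E \<in> bowen_covers phi n e" unfolding bowen_covers_def by simp
  then show ?thesis by (intro notI) simp
qed

definition sep :: "nat \<Rightarrow> real \<Rightarrow> 'a set \<Rightarrow> bool" where
  "sep n e F \<longleftrightarrow> finite F \<and> (\<forall>x\<in>F. \<forall>y\<in>F. x \<noteq> y \<longrightarrow> y \<notin> bowen_ball phi n x e)"

lemma sep_card_bound:
  assumes "e > 0" obtains C where "\<And>F. sep n (2*e) F \<Longrightarrow> card F \<le> C"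
proof -
  obtain E where E: "finite E" "(\<Union>x\<in>E. bowen_ball phi n x e) = UNIV"
    using finite_cover_exists[OF assms] by blast
  have cb: "card F \<le> card E" if F: "sep n (2*e) F" for F
  proof -
    define f where "f = (\<lambda>y. SOME x. x \<in> E \<and> y \<in> bowen_ball phi n x e)"
    have f: "f y \<in> E \<and> y \<in> bowen_ball phi n (f y) e" for y
    proof -
      have "\<exists>x. x \<in> E \<and> y \<in> bowen_ball phi n x e" using E(2) by blast
      then show ?thesis unfolding f_def by (rule someI_ex)
    qed
    have "inj_on f F"
    proof (rule inj_onI)
      fix x y assume xy: "x \<in> F" "y \<in> F" "f x = f y"
      have "x \<in> bowen_ball phi n (f x) e" "y \<in> bowen_ball phi n (f x) e" using f xy(3) by metis+
      then have "y \<in> bowen_ball phi n x (e+e)" by (rule bowen_tri)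
      then show "x = y" using F xy unfolding sep_def by (metis mult_2)
    qed
    moreover have "f ` F \<subseteq> E" using f by blast
    ultimately show ?thesis using card_inj_on_le E(1) by blast
  qed
  show ?thesis by (rule that[OF cb])
qed

lemma sep_exists:
  assumes "e > 0"
  obtains F where "finite F" "(\<Union>x\<in>F. bowen_ball phi n x (2*e)) = UNIV"
    "\<And>x y. x \<in> F \<Longrightarrow> y \<in> F \<Longrightarrow> x \<noteq> y \<Longrightarrow> bowen_ball phi n x e \<inter> bowen_ball phi n y e = {}"
proof -
  obtain C where C: "\<And>F. sep n (2*e) F \<Longrightarrow> card F \<le> C" using sep_card_bound[OF assms] by blast
  have s0: "sep n (2*e) {}" by (simp add: sep_def)
  have "\<exists>F. sep n (2*e) F \<and> (\<forall>F'. sep n (2*e) F' \<longrightarrow> card F' \<le> card F)"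
    by (rule Lattices_Big.ex_has_greatest_nat[where b="Suc C" and P="sep n (2*e)" and f=card, OF s0]) (simp add: C le_imp_less_Suc)
  then obtain F where F: "sep n (2*e) F" and Fmax: "\<And>F'. sep n (2*e) F' \<Longrightarrow> card F' \<le> card F"
    by blast
  have fin: "finite F" using F by (simp add: sep_def)
  have cov: "(\<Union>x\<in>F. bowen_ball phi n x (2*e)) = UNIV"
  proof (rule ccontr)
    assume "(\<Union>x\<in>F. bowen_ball phi n x (2*e)) \<noteq> UNIV"
    then obtain z where z: "\<And>x. x \<in> F \<Longrightarrow> z \<notin> bowen_ball phi n x (2*e)" by blast
    then have zF: "z \<notin> F" using bowen_center[where e="2*e" and n=n] assms by force
    have "sep n (2*e) (insert z F)"
      using F z fin unfolding sep_def by (auto simp: bowen_sym)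
    then have "card (insert z F) \<le> card F" by (rule Fmax)
    then show False using zF fin by simp
  qed
  have disj: "bowen_ball phi n x e \<inter> bowen_ball phi n y e = {}" if "x \<in> F" "y \<in> F" "x \<noteq> y" for x y
  proof (rule ccontr)
    assume "bowen_ball phi n x e \<inter> bowen_ball phi n y e \<noteq> {}"
    then obtain w where "w \<in> bowen_ball phi n x e" "w \<in> bowen_ball phi n y e" by blast
    then have "x \<in> bowen_ball phi n w e" "y \<in> bowen_ball phi n w e" by (auto simp: bowen_sym)
    then have "y \<in> bowen_ball phi n x (e+e)" by (rule bowen_tri)
    then show False using F that unfolding sep_def by (metis mult_2)
  qed
  show ?thesis using that fin cov disj by blast
qed


lemma bsum_add: "birkhoff_sum phi h (n+m) x = birkhoff_sum phi h n x + birkhoff_sum phi h m ((phi ^^ n) x)"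
proof -
  have "birkhoff_sum phi h (n+m) x = (\<Sum>k<n. h ((phi ^^ k) x)) + (\<Sum>k<m. h ((phi ^^ (n+k)) x))"
    unfolding birkhoff_sum_def by (induction m) simp_all
  also have "(\<Sum>k<m. h ((phi ^^ (n+k)) x)) = birkhoff_sum phi h m ((phi ^^ n) x)"
    unfolding birkhoff_sum_def by (simp add: funpow_add add.commute)
  finally show ?thesis unfolding birkhoff_sum_def by simp
qed

lemma bsum_blocks: "birkhoff_sum phi h (q*m) x = (\<Sum>i<q. birkhoff_sum phi h m ((phi ^^ (i*m)) x))"
proof (induction q)
  case 0 then show ?case by (simp add: birkhoff_sum_def)
next
  case (Suc q)
  have "birkhoff_sum phi h (Suc q * m) x = birkhoff_sum phi h (q*m + m) x" by (simp add: add.commute)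
  also have "\<dots> = birkhoff_sum phi h (q*m) x + birkhoff_sum phi h m ((phi ^^ (q*m)) x)" by (rule bsum_add)
  finally show ?case using Suc by simp
qed

lemma bsum_plus: "birkhoff_sum phi (\<lambda>x. g x + h x) n x = birkhoff_sum phi g n x + birkhoff_sum phi h n x"
  unfolding birkhoff_sum_def by (simp add: sum.distrib)

lemma cont_bounded: fixes g :: "'a \<Rightarrow> real" assumes "continuous_on UNIV g" obtains C where "\<And>x. \<bar>g x\<bar> \<le> C"
proof -
  have "compact (g ` UNIV)" by (rule compact_continuous_image[OF assms cpt])
  then have "bounded (range g)" by (rule compact_imp_bounded)
  then obtain C where "\<forall>y\<in>range g. norm y \<le> C" unfolding bounded_iff by blast
  then show ?thesis using that by auto
qed

lemma bsum_bound: assumes "\<And>z. \<bar>g z\<bar> \<le> C" shows "\<bar>birkhoff_sum phi g n x\<bar> \<le> real n * C"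
proof -
  have "\<bar>birkhoff_sum phi g n x\<bar> \<le> (\<Sum>k<n. \<bar>g ((phi ^^ k) x)\<bar>)"
    unfolding birkhoff_sum_def by (rule sum_abs)
  also have "\<dots> \<le> (\<Sum>k<n. C)" by (intro sum_mono assms)
  finally show ?thesis by simp
qed

lemma bsum_var:
  assumes "continuous_on UNIV g" "\<eta> > 0"
  obtains d where "d > 0" "\<And>n x y e. e \<le> d \<Longrightarrow> y \<in> bowen_ball phi n x e \<Longrightarrow>
     \<bar>birkhoff_sum phi g n y - birkhoff_sum phi g n x\<bar> \<le> real n * \<eta>"
proof -
  have "uniformly_continuous_on UNIV g" by (rule compact_uniformly_continuous[OF assms(1) cpt])
  then obtain d where d0: "d > 0" "\<forall>x\<in>UNIV. \<forall>x'\<in>UNIV. dist x' x < d \<longrightarrow> dist (g x') (g x) < \<eta>"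
    unfolding uniformly_continuous_on_def using assms(2) by blast
  have d: "d > 0" "\<And>a b. dist a b < d \<Longrightarrow> dist (g a) (g b) < \<eta>" using d0 by auto
  have "\<bar>birkhoff_sum phi g n y - birkhoff_sum phi g n x\<bar> \<le> real n * \<eta>"
    if e: "e \<le> d" and y: "y \<in> bowen_ball phi n x e" for n x y e
  proof -
    have "\<bar>birkhoff_sum phi g n y - birkhoff_sum phi g n x\<bar> = \<bar>\<Sum>k<n. g ((phi ^^ k) y) - g ((phi ^^ k) x)\<bar>"
      unfolding birkhoff_sum_def by (simp add: sum_subtractf)
    also have "\<dots> \<le> (\<Sum>k<n. \<bar>g ((phi ^^ k) y) - g ((phi ^^ k) x)\<bar>)" by (rule sum_abs)
    also have "\<dots> \<le> (\<Sum>k<n. \<eta>)"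
    proof (rule sum_mono)
      fix k assume "k \<in> {..<n}"
      then have "dist ((phi ^^ k) y) ((phi ^^ k) x) < d" using y e unfolding bowen_ball_def by force
      then have "dist (g ((phi ^^ k) y)) (g ((phi ^^ k) x)) < \<eta>" by (rule d(2))
      then show "\<bar>g ((phi ^^ k) y) - g ((phi ^^ k) x)\<bar> \<le> \<eta>" by (simp add: dist_real_def)
    qed
    finally show ?thesis by simp
  qed
  then show ?thesis using that d(1) by blast
qed

lemma bounded_borel_bound: assumes "bounded_borel f" obtains B where "\<And>x. \<bar>f x\<bar> \<le> B"
proof -
  have "bounded (range f)" using assms by (simp add: bounded_borel_def)
  then obtain B where "\<forall>y\<in>range f. norm y \<le> B" unfolding bounded_iff by blast
  then show ?thesis using that by auto
qed

lemma classA_approx: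
  assumes A: "class_A phi Gs" and d: "\<delta> > 0"
  obtains g N where "continuous_on UNIV g" "\<And>n x. n \<ge> N \<Longrightarrow> \<bar>Gs n x - birkhoff_sum phi g n x\<bar> \<le> real n * \<delta>"
proof -
  obtain Gk where Gk: "\<And>k. continuous_on UNIV (Gk k)"
    and lim: "(\<lambda>k. limsup (\<lambda>n. ereal (sup_norm (\<lambda>x. Gs n x - birkhoff_sum phi (Gk k) n x) / real n))) \<longlonglongrightarrow> 0"
    using A unfolding class_A_def by blast
  have "eventually (\<lambda>k. limsup (\<lambda>n. ereal (sup_norm (\<lambda>x. Gs n x - birkhoff_sum phi (Gk k) n x) / real n)) < ereal \<delta>) sequentially"
    using order_tendstoD(2)[OF lim] d by simp
  then obtain k where k: "limsup (\<lambda>n. ereal (sup_norm (\<lambda>x. Gs n x - birkhoff_sum phi (Gk k) n x) / real n)) < ereal \<delta>"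
    by (auto simp: eventually_sequentially)
  define f where "f = (\<lambda>n x. Gs n x - birkhoff_sum phi (Gk k) n x)"
  have "eventually (\<lambda>n. ereal \<delta> > ereal (sup_norm (f n) / real n)) sequentially"
  proof -
    have "limsup (\<lambda>n. ereal (sup_norm (f n) / real n)) \<le> limsup (\<lambda>n. ereal (sup_norm (f n) / real n))" by simp
    then have "\<forall>y > limsup (\<lambda>n. ereal (sup_norm (f n) / real n)). eventually (\<lambda>n. y > ereal (sup_norm (f n) / real n)) sequentially"
      by (subst (asm) Limsup_le_iff) 
    then show ?thesis using k unfolding f_def by blast
  qed
  then obtain N where N: "\<And>n. n \<ge> N \<Longrightarrow> sup_norm (f n) / real n < \<delta>"
    by (auto simp: eventually_sequentially)
  obtain C where C: "\<And>x. \<bar>Gk k x\<bar> \<le> C" using cont_bounded[OF Gk] by blast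
  have "\<bar>Gs n x - birkhoff_sum phi (Gk k) n x\<bar> \<le> real n * \<delta>" if n: "n \<ge> Suc N" for n x
  proof -
    obtain B where B: "\<And>x. \<bar>Gs n x\<bar> \<le> B" using A bounded_borel_bound unfolding class_A_def by blast
    have bd: "\<bar>f n y\<bar> \<le> B + real n * C" for y
      using B[of y] bsum_bound[where g="Gk k" and C=C and n=n and x=y, OF C] unfolding f_def by linarith
    have "\<bar>f n x\<bar> \<le> sup_norm (f n)" unfolding sup_norm_def
      by (rule cSUP_upper) (use bd in \<open>auto intro!: bdd_aboveI2\<close>)
    also have "\<dots> < real n * \<delta>" using N[of n] n by (simp add: field_simps)
    finally show ?thesis unfolding f_def by simp
  qed
  then show ?thesis using that Gk by blast
qed


lemma spaceP: "space P = UNIV" using sets_eq_imp_space_eq[OF setsP] by simp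

lemma int_ind: "integrable P (indicator (bowen_ball phi n x e) :: 'a \<Rightarrow> real)"
proof -
  interpret prob_space P by (rule prob)
  show ?thesis using bowen_sets by (simp add: integrable_indicator_iff spaceP less_top[symmetric])
qed

lemma integral_ind: "(\<integral>y. c * indicator (bowen_ball phi n x e) y \<partial>P) = c * measure P (bowen_ball phi n x e)"
  using int_ind by (simp add: spaceP)

lemma int_c_ind: "integrable P (\<lambda>y. c * indicator (bowen_ball phi n x e) y :: real)"
  using int_ind by simp

lemma exp_int:
  fixes f :: "'a \<Rightarrow> real"
  assumes "bounded_borel f"
  shows "integrable P (\<lambda>x. exp (f x))"
proof -
  interpret prob_space P by (rule prob)
  obtain B where B: "\<And>x. \<bar>f x\<bar> \<le> B" using bounded_borel_bound[OF assms] by blast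
  have fb: "f \<in> borel_measurable borel" using assms by (simp add: bounded_borel_def)
  have fm: "f \<in> borel_measurable P"
    using fb measurable_cong_sets[OF setsP refl, of borel] by blast
  have "(\<lambda>x. exp (f x)) \<in> borel_measurable P"
    by (rule measurable_compose[OF fm borel_measurable_exp])
  moreover have "AE x in P. norm (exp (f x)) \<le> exp B" using B by (auto simp: abs_le_iff)
  ultimately show ?thesis by (intro integrable_const_bound[where B="exp B"]) auto
qed

lemma exp_int_bounds:
  fixes f :: "'a \<Rightarrow> real"
  assumes "bounded_borel f" "\<And>x. a \<le> f x" "\<And>x. f x \<le> b"
  shows "exp a \<le> (\<integral>x. exp (f x) \<partial>P)" "(\<integral>x. exp (f x) \<partial>P) \<le> exp b"
proof -
  interpret prob_space P by (rule prob)
  have "(\<integral>x. exp a \<partial>P) \<le> (\<integral>x. exp (f x) \<partial>P)"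
    using assms by (intro integral_mono exp_int[OF assms(1)] integrable_const) auto
  then show "exp a \<le> (\<integral>x. exp (f x) \<partial>P)" by (simp add: prob_space)
  have "(\<integral>x. exp (f x) \<partial>P) \<le> (\<integral>x. exp b \<partial>P)"
    using assms by (intro integral_mono exp_int[OF assms(1)] integrable_const) auto
  then show "(\<integral>x. exp (f x) \<partial>P) \<le> exp b" by (simp add: prob_space)
qed

lemma exp_int_pos:
  fixes f :: "'a \<Rightarrow> real"
  assumes "bounded_borel f" shows "0 < (\<integral>x. exp (f x) \<partial>P)"
proof -
  obtain B where B: "\<And>x. \<bar>f x\<bar> \<le> B" using bounded_borel_bound[OF assms] by blast
  have "exp (-B) \<le> (\<integral>x. exp (f x) \<partial>P)"
  proof (rule exp_int_bounds(1)[OF assms, where b=B])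
    fix x show "-B \<le> f x" "f x \<le> B" using B[of x] unfolding abs_le_iff by linarith+
  qed
  then show ?thesis by (smt (verit) exp_gt_zero)
qed

end

locale gset = dyn +
  fixes G F :: "nat \<Rightarrow> 'a \<Rightarrow> real" and p :: real and K :: "nat \<Rightarrow> real \<Rightarrow> real"
  assumes Kge: "\<And>n e. n \<ge> 1 \<Longrightarrow> e > 0 \<Longrightarrow> K n e \<ge> 1"
    and Klow: "\<And>n e x. n \<ge> 1 \<Longrightarrow> e > 0 \<Longrightarrow> exp (G n x - real n * p) / K n e \<le> measure P (bowen_ball phi n x e)"
    and Kup: "\<And>n e x. n \<ge> 1 \<Longrightarrow> e > 0 \<Longrightarrow> measure P (bowen_ball phi n x e) \<le> K n e * exp (G n x - real n * p)"
    and Klim: "((\<lambda>e. limsup (\<lambda>n. ereal (ln (K n e) / real n))) \<longlongrightarrow> 0) (at_right 0)"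
    and Fb: "\<And>n. bounded_borel (F n)"
begin

lemma upper_est:
  assumes n: "n \<ge> 1" and e: "e > 0" and E: "E \<in> bowen_covers phi n e"
    and var: "\<And>x y. y \<in> bowen_ball phi n x e \<Longrightarrow> F n y \<le> F n x + V"
  shows "(\<integral>y. exp (F n y) \<partial>P) \<le> K n e * exp (V - real n * p) * (\<Sum>x\<in>E. exp (G n x + F n x))"
proof -
  have fin: "finite E" and cov: "(\<Union>x\<in>E. bowen_ball phi n x e) = UNIV" using E by (auto simp: bowen_covers_def)
  let ?B = "\<lambda>x. bowen_ball phi n x e"
  have pt: "exp (F n y) \<le> (\<Sum>x\<in>E. exp (F n x + V) * indicator (?B x) y)" for y
  proof -
    obtain x where x: "x \<in> E" "y \<in> ?B x" using cov by blast
    have "exp (F n y) \<le> exp (F n x + V) * indicator (?B x) y" using var[OF x(2)] x(2) by simp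
    also have "\<dots> \<le> (\<Sum>x\<in>E. exp (F n x + V) * indicator (?B x) y)"
      by (rule member_le_sum[OF x(1)]) (auto simp: fin)
    finally show ?thesis .
  qed
  have "(\<integral>y. exp (F n y) \<partial>P) \<le> (\<integral>y. (\<Sum>x\<in>E. exp (F n x + V) * indicator (?B x) y) \<partial>P)"
    by (rule integral_mono) (auto intro!: integrable_sum int_c_ind exp_int[OF Fb] pt)
  also have "\<dots> = (\<Sum>x\<in>E. (\<integral>y. exp (F n x + V) * indicator (?B x) y \<partial>P))"
    by (rule Bochner_Integration.integral_sum) (rule int_c_ind)
  also have "\<dots> = (\<Sum>x\<in>E. exp (F n x + V) * measure P (?B x))"
    by (simp only: integral_ind)
  also have "\<dots> \<le> (\<Sum>x\<in>E. exp (F n x + V) * (K n e * exp (G n x - real n * p)))"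
    by (intro sum_mono mult_left_mono Kup n e) auto
  also have "\<dots> = (\<Sum>x\<in>E. K n e * exp (V - real n * p) * exp (G n x + F n x))"
    by (intro sum.cong refl) (simp add: exp_add[symmetric] exp_diff mult_ac)
  also have "\<dots> = K n e * exp (V - real n * p) * (\<Sum>x\<in>E. exp (G n x + F n x))"
    by (simp add: sum_distrib_left)
  finally show ?thesis .
qed

lemma lower_est:
  assumes n: "n \<ge> 1" and e: "e > 0" and S: "finite S"
    and disj: "\<And>x y. x \<in> S \<Longrightarrow> y \<in> S \<Longrightarrow> x \<noteq> y \<Longrightarrow> bowen_ball phi n x e \<inter> bowen_ball phi n y e = {}"
    and var: "\<And>x y. y \<in> bowen_ball phi n x e \<Longrightarrow> F n x - V \<le> F n y"
  shows "(\<Sum>x\<in>S. exp (G n x + F n x)) \<le> K n e * exp (V + real n * p) * (\<integral>y. exp (F n y) \<partial>P)"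
proof -
  let ?B = "\<lambda>x. bowen_ball phi n x e"
  have Kpos: "K n e > 0" using Kge[OF n e] by simp
  have pt: "(\<Sum>x\<in>S. exp (F n x - V) * indicator (?B x) y) \<le> exp (F n y)" for y
  proof (cases "\<exists>x\<in>S. y \<in> ?B x")
    case True
    then obtain x0 where x0: "x0 \<in> S" "y \<in> ?B x0" by blast
    have z: "(\<Sum>x\<in>S - {x0}. exp (F n x - V) * indicator (?B x) y) = 0"
    proof (rule sum.neutral, intro ballI)
      fix x assume "x \<in> S - {x0}"
      then have "y \<notin> ?B x" using disj[of x x0] x0 by blast
      then show "exp (F n x - V) * indicator (?B x) y = 0" by simp
    qed
    have "(\<Sum>x\<in>S. exp (F n x - V) * indicator (?B x) y)
        = exp (F n x0 - V) * indicator (?B x0) y + (\<Sum>x\<in>S - {x0}. exp (F n x - V) * indicator (?B x) y)"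
      by (rule sum.remove[OF S x0(1)])
    also have "\<dots> = exp (F n x0 - V)" using z x0(2) by simp
    also have "\<dots> \<le> exp (F n y)" using var[OF x0(2)] by simp
    finally show ?thesis .
  next
    case False
    then have "(\<Sum>x\<in>S. exp (F n x - V) * indicator (?B x) y) = 0"
      by (intro sum.neutral) auto
    then show ?thesis by simp
  qed
  have "(\<integral>y. (\<Sum>x\<in>S. exp (F n x - V) * indicator (?B x) y) \<partial>P) = (\<Sum>x\<in>S. (\<integral>y. exp (F n x - V) * indicator (?B x) y \<partial>P))"
    by (rule Bochner_Integration.integral_sum) (rule int_c_ind)
  then have "(\<Sum>x\<in>S. exp (F n x - V) * measure P (?B x)) = (\<integral>y. (\<Sum>x\<in>S. exp (F n x - V) * indicator (?B x) y) \<partial>P)"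
    by (simp only: integral_ind)
  also have "\<dots> \<le> (\<integral>y. exp (F n y) \<partial>P)"
    by (rule integral_mono) (auto intro!: integrable_sum int_c_ind exp_int[OF Fb] pt)
  finally have I: "(\<Sum>x\<in>S. exp (F n x - V) * measure P (?B x)) \<le> (\<integral>y. exp (F n y) \<partial>P)" .
  have t: "K n e * exp (V + real n * p) * (exp (F n x - V) * (exp (G n x - real n * p) / K n e)) = exp (G n x + F n x)" for x
  proof -
    have "K n e * exp (V + real n * p) * (exp (F n x - V) * (exp (G n x - real n * p) / K n e))
        = exp (V + real n * p) * exp (F n x - V) * exp (G n x - real n * p)" using Kpos by simp
    also have "\<dots> = exp ((V + real n * p) + (F n x - V) + (G n x - real n * p))" by (simp only: exp_add)
    also have "(V + real n * p) + (F n x - V) + (G n x - real n * p) = G n x + F n x" by simp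
    finally show ?thesis .
  qed
  have "(\<Sum>x\<in>S. exp (G n x + F n x)) = K n e * exp (V + real n * p) * (\<Sum>x\<in>S. exp (F n x - V) * (exp (G n x - real n * p) / K n e))"
    by (simp only: sum_distrib_left t)
  also have "\<dots> \<le> K n e * exp (V + real n * p) * (\<Sum>x\<in>S. exp (F n x - V) * measure P (?B x))"
    using Kpos by (intro mult_left_mono sum_mono Klow n e) auto
  also have "\<dots> \<le> K n e * exp (V + real n * p) * (\<integral>y. exp (F n y) \<partial>P)"
    using Kpos I by (intro mult_left_mono) auto
  finally show ?thesis .
qed


definition HH :: "nat \<Rightarrow> 'a \<Rightarrow> real" where "HH n x = G n x + F n x"

definition Z :: "nat \<Rightarrow> real \<Rightarrow> real" where
  "Z n e = Inf {\<Sum>x\<in>E. exp (HH n x) | E. E \<in> bowen_covers phi n e}"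

lemma Z_lower: assumes "E \<in> bowen_covers phi n e" shows "Z n e \<le> (\<Sum>x\<in>E. exp (HH n x))"
  unfolding Z_def
proof (rule cInf_lower)
  show "(\<Sum>x\<in>E. exp (HH n x)) \<in> {\<Sum>x\<in>E. exp (HH n x) | E. E \<in> bowen_covers phi n e}" using assms by blast
  show "bdd_below {\<Sum>x\<in>E. exp (HH n x) | E. E \<in> bowen_covers phi n e}"
    by (rule bdd_belowI[where m=0]) (auto intro: sum_nonneg)
qed

lemma Z_greatest: assumes "e > 0" "\<And>E. E \<in> bowen_covers phi n e \<Longrightarrow> t \<le> (\<Sum>x\<in>E. exp (HH n x))"
  shows "t \<le> Z n e"
  unfolding Z_def
proof (rule cInf_greatest)
  show "{\<Sum>x\<in>E. exp (HH n x) | E. E \<in> bowen_covers phi n e} \<noteq> {}" using covers_ne[OF assms(1), of n] by blast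
qed (use assms(2) in blast)

lemma upper_Z:
  assumes n: "n \<ge> 1" and e: "e > 0" and var: "\<And>x y. y \<in> bowen_ball phi n x e \<Longrightarrow> \<bar>F n y - F n x\<bar> \<le> V"
  shows "(\<integral>y. exp (F n y) \<partial>P) \<le> K n e * exp (V - real n * p) * Z n e" and "Z n e > 0"
proof -
  have Kpos: "K n e * exp (V - real n * p) > 0" using Kge[OF n e] by simp
  have var': "\<And>x y. y \<in> bowen_ball phi n x e \<Longrightarrow> F n y \<le> F n x + V" using var by (smt (verit))
  have "(\<integral>y. exp (F n y) \<partial>P) / (K n e * exp (V - real n * p)) \<le> Z n e"
  proof (rule Z_greatest[OF e])
    fix E assume E: "E \<in> bowen_covers phi n e"
    have "(\<integral>y. exp (F n y) \<partial>P) \<le> K n e * exp (V - real n * p) * (\<Sum>x\<in>E. exp (HH n x))"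
      using upper_est[OF n e E var'] by (simp add: HH_def)
    then show "(\<integral>y. exp (F n y) \<partial>P) / (K n e * exp (V - real n * p)) \<le> (\<Sum>x\<in>E. exp (HH n x))"
      using Kpos by (simp add: divide_le_eq mult.commute)
  qed
  then show "(\<integral>y. exp (F n y) \<partial>P) \<le> K n e * exp (V - real n * p) * Z n e"
    using Kpos by (simp add: divide_le_eq mult.commute)
  moreover have "(\<integral>y. exp (F n y) \<partial>P) > 0" by (rule exp_int_pos[OF Fb])
  ultimately show "Z n e > 0" using Kpos by (metis less_le_trans zero_less_mult_pos)
qed

lemma lower_Z:
  assumes n: "n \<ge> 1" and e: "e > 0" and var: "\<And>x y. y \<in> bowen_ball phi n x e \<Longrightarrow> \<bar>F n y - F n x\<bar> \<le> V"
  shows "Z n (2*e) \<le> K n e * exp (V + real n * p) * (\<integral>y. exp (F n y) \<partial>P)"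
proof -
  obtain S where S: "finite S" "(\<Union>x\<in>S. bowen_ball phi n x (2*e)) = UNIV"
    "\<And>x y. x \<in> S \<Longrightarrow> y \<in> S \<Longrightarrow> x \<noteq> y \<Longrightarrow> bowen_ball phi n x e \<inter> bowen_ball phi n y e = {}"
    using sep_exists[OF e, where n=n] by metis
  have var': "\<And>x y. y \<in> bowen_ball phi n x e \<Longrightarrow> F n x - V \<le> F n y" using var by (smt (verit))
  have "S \<in> bowen_covers phi n (2*e)" using S by (simp add: bowen_covers_def)
  then have "Z n (2*e) \<le> (\<Sum>x\<in>S. exp (HH n x))" by (rule Z_lower)
  also have "\<dots> \<le> K n e * exp (V + real n * p) * (\<integral>y. exp (F n y) \<partial>P)"
    using lower_est[OF n e S(1) S(3) var'] by (simp add: HH_def)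
  finally show ?thesis .
qed


lemma block:
  assumes approx: "\<And>n x. n \<ge> N \<Longrightarrow> \<bar>HH n x - birkhoff_sum phi h n x\<bar> \<le> real n * \<delta>"
    and varh: "\<And>x y. y \<in> bowen_ball phi m x c \<Longrightarrow> \<bar>birkhoff_sum phi h m y - birkhoff_sum phi h m x\<bar> \<le> real m * \<delta>"
    and m: "m \<ge> N" "m \<ge> 1" and q: "q \<ge> 1" and c: "c > 0" and E: "E \<in> bowen_covers phi m c"
  shows "Z (q*m) (2*c) \<le> exp (3 * real q * real m * \<delta>) * (\<Sum>x\<in>E. exp (HH m x)) ^ q"
proof -
  have EE: "finite E \<and> (\<Union>x\<in>E. bowen_ball phi m x c) = UNIV" using E unfolding bowen_covers_def by simp
  have finE: "finite E" by (rule conjunct1[OF EE])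
  have covE: "(\<Union>x\<in>E. bowen_ball phi m x c) = UNIV" by (rule conjunct2[OF EE])
  define I where "I s = {z. \<forall>i<q. (phi ^^ (i*m)) z \<in> bowen_ball phi m (s i) c}" for s :: "nat \<Rightarrow> 'a"
  define w where "w s = (SOME z. z \<in> I s)" for s
  define T where "T = {s \<in> PiE {..<q} (\<lambda>_. E). I s \<noteq> {}}"
  have wI: "s \<in> T \<Longrightarrow> w s \<in> I s" for s
  proof -
    assume "s \<in> T"
    then have "\<exists>z. z \<in> I s" unfolding T_def by blast
    then show "w s \<in> I s" unfolding w_def by (rule someI_ex)
  qed
  have finT: "finite T"
  proof (rule finite_subset)
    show "T \<subseteq> PiE {..<q} (\<lambda>_. E)" unfolding T_def by blast
    show "finite (PiE {..<q} (\<lambda>_. E))" using finE by (intro finite_PiE) auto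
  qed
  have cov: "w ` T \<in> bowen_covers phi (q*m) (2*c)"
  proof -
    have "z \<in> (\<Union>s\<in>T. bowen_ball phi (q*m) (w s) (2*c))" for z
    proof -
      define ch where "ch i = (SOME x. x \<in> E \<and> (phi ^^ (i*m)) z \<in> bowen_ball phi m x c)" for i
      have ch: "ch i \<in> E \<and> (phi ^^ (i*m)) z \<in> bowen_ball phi m (ch i) c" for i
      proof -
        have "\<exists>x. x \<in> E \<and> (phi ^^ (i*m)) z \<in> bowen_ball phi m x c" using covE by blast
        then show ?thesis unfolding ch_def by (rule someI_ex)
      qed
      define s where "s = restrict ch {..<q}"
      have zI: "z \<in> I s" unfolding I_def s_def using ch by auto
      have sT: "s \<in> T" unfolding T_def s_def using ch zI[unfolded s_def] by auto
      have wsI: "w s \<in> I s" by (rule wI[OF sT])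
      have "z \<in> bowen_ball phi (q*m) (w s) (2*c)" unfolding bowen_ball_def
      proof (intro CollectI allI impI)
        fix k assume k: "k < q*m"
        define i where "i = k div m"
        define j where "j = k mod m"
        have mpos: "m > 0" using m by simp
        have iq: "i < q" unfolding i_def using k by (simp add: less_mult_imp_div_less)
        have jm: "j < m" unfolding j_def using mpos by simp
        have kij: "k = j + i*m" unfolding i_def j_def by simp
        have d1: "dist ((phi ^^ j) ((phi ^^ (i*m)) z)) ((phi ^^ j) (s i)) < c"
          using zI iq jm unfolding I_def bowen_ball_def by blast
        have d2: "dist ((phi ^^ j) ((phi ^^ (i*m)) (w s))) ((phi ^^ j) (s i)) < c"
          using wsI iq jm unfolding I_def bowen_ball_def by blast
        have "(phi ^^ k) = (phi ^^ j) \<circ> (phi ^^ (i*m))" unfolding kij by (rule funpow_add)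
        then have eq: "\<And>y. (phi ^^ k) y = (phi ^^ j) ((phi ^^ (i*m)) y)" by simp
        have "dist ((phi ^^ k) z) ((phi ^^ k) (w s)) \<le> dist ((phi ^^ k) z) ((phi ^^ j) (s i)) + dist ((phi ^^ k) (w s)) ((phi ^^ j) (s i))"
          by (rule dist_triangle2)
        also have "\<dots> < c + c" unfolding eq using d1 d2 by simp
        finally show "dist ((phi ^^ k) z) ((phi ^^ k) (w s)) < 2*c" by simp
      qed
      then show ?thesis using sT by blast
    qed
    then have "(\<Union>s\<in>T. bowen_ball phi (q*m) (w s) (2*c)) = UNIV" by blast
    then show ?thesis using finT unfolding bowen_covers_def by auto
  qed
  have tm: "exp (HH (q*m) (w s)) \<le> exp (3 * real q * real m * \<delta>) * (\<Prod>i<q. exp (HH m (s i)))" if sT: "s \<in> T" for s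
  proof -
    have wsI: "w s \<in> I s" by (rule wI[OF sT])
    have qm: "q*m \<ge> N" using m q by (metis le_trans mult_le_mono1 mult_1)
    have "HH (q*m) (w s) \<le> birkhoff_sum phi h (q*m) (w s) + real (q*m) * \<delta>"
      using approx[OF qm, of "w s"] by linarith
    also have "birkhoff_sum phi h (q*m) (w s) = (\<Sum>i<q. birkhoff_sum phi h m ((phi ^^ (i*m)) (w s)))"
      by (rule bsum_blocks)
    also have "\<dots> \<le> (\<Sum>i<q. HH m (s i) + 2 * real m * \<delta>)"
    proof (rule sum_mono)
      fix i assume "i \<in> {..<q}"
      then have "(phi ^^ (i*m)) (w s) \<in> bowen_ball phi m (s i) c" using wsI unfolding I_def by blast
      then have "\<bar>birkhoff_sum phi h m ((phi ^^ (i*m)) (w s)) - birkhoff_sum phi h m (s i)\<bar> \<le> real m * \<delta>"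
        by (rule varh)
      moreover have "\<bar>HH m (s i) - birkhoff_sum phi h m (s i)\<bar> \<le> real m * \<delta>" by (rule approx[OF m(1)])
      ultimately show "birkhoff_sum phi h m ((phi ^^ (i*m)) (w s)) \<le> HH m (s i) + 2 * real m * \<delta>"
        by linarith
    qed
    also have "\<dots> = (\<Sum>i<q. HH m (s i)) + 2 * real q * real m * \<delta>" by (simp add: sum.distrib)
    finally have "HH (q*m) (w s) \<le> 3 * real q * real m * \<delta> + (\<Sum>i<q. HH m (s i))" by (simp add: algebra_simps)
    then have "exp (HH (q*m) (w s)) \<le> exp (3 * real q * real m * \<delta> + (\<Sum>i<q. HH m (s i)))" by simp
    also have "\<dots> = exp (3 * real q * real m * \<delta>) * (\<Prod>i<q. exp (HH m (s i)))" by (simp add: exp_add exp_sum)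
    finally show ?thesis .
  qed
  have "Z (q*m) (2*c) \<le> (\<Sum>x\<in>w ` T. exp (HH (q*m) x))" by (rule Z_lower[OF cov])
  also have "\<dots> \<le> (\<Sum>s\<in>T. exp (HH (q*m) (w s)))" using sum_image_le[OF finT, of "\<lambda>x. exp (HH (q*m) x)" w] by (simp add: o_def)
  also have "\<dots> \<le> (\<Sum>s\<in>T. exp (3 * real q * real m * \<delta>) * (\<Prod>i<q. exp (HH m (s i))))" by (rule sum_mono[OF tm])
  also have "\<dots> \<le> (\<Sum>s\<in>PiE {..<q} (\<lambda>_. E). exp (3 * real q * real m * \<delta>) * (\<Prod>i<q. exp (HH m (s i))))"
    by (rule sum_mono2) (auto simp: T_def finE finite_PiE intro!: prod_nonneg mult_nonneg_nonneg)
  also have "\<dots> = exp (3 * real q * real m * \<delta>) * (\<Sum>s\<in>PiE {..<q} (\<lambda>_. E). \<Prod>i<q. exp (HH m (s i)))"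
    by (simp only: sum_distrib_left)
  also have "\<dots> = exp (3 * real q * real m * \<delta>) * (\<Prod>i<q. \<Sum>x\<in>E. exp (HH m x))"
    using prod_sum_PiE[of "{..<q}" "\<lambda>_. E" "\<lambda>i x. exp (HH m x)"] finE by simp
  also have "\<dots> = exp (3 * real q * real m * \<delta>) * (\<Sum>x\<in>E. exp (HH m x)) ^ q" by simp
  finally show ?thesis .
qed

lemma block_log:
  assumes approx: "\<And>n x. n \<ge> N \<Longrightarrow> \<bar>HH n x - birkhoff_sum phi h n x\<bar> \<le> real n * \<delta>"
    and varh: "\<And>x y. y \<in> bowen_ball phi m x c \<Longrightarrow> \<bar>birkhoff_sum phi h m y - birkhoff_sum phi h m x\<bar> \<le> real m * \<delta>"
    and m: "m \<ge> N" "m \<ge> 1" and q: "q \<ge> 1" and c: "c > 0" and Zpos: "Z (q*m) (2*c) > 0"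
  shows "ln (Z (q*m) (2*c)) \<le> 3 * real q * real m * \<delta> + real q * ln (Z m c)"
proof -
  define a where "a = (ln (Z (q*m) (2*c)) - 3 * real q * real m * \<delta>) / real q"
  have qpos: "real q > 0" using q by simp
  have "exp a \<le> Z m c"
  proof (rule Z_greatest[OF c])
    fix E assume E: "E \<in> bowen_covers phi m c"
    have bl: "Z (q*m) (2*c) \<le> exp (3 * real q * real m * \<delta>) * (\<Sum>x\<in>E. exp (HH m x)) ^ q"
      by (rule block[OF approx varh m q c E])
    have Epos: "(\<Sum>x\<in>E. exp (HH m x)) > 0"
    proof -
      have "finite E" "E \<noteq> {}" using E by (auto simp: bowen_covers_def)
      then show ?thesis by (intro sum_pos) auto
    qed
    have "ln (Z (q*m) (2*c)) \<le> ln (exp (3 * real q * real m * \<delta>) * (\<Sum>x\<in>E. exp (HH m x)) ^ q)"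
      using bl Zpos by simp
    also have "\<dots> = 3 * real q * real m * \<delta> + real q * ln (\<Sum>x\<in>E. exp (HH m x))"
      using Epos by (simp add: ln_mult ln_realpow)
    finally have "a \<le> ln (\<Sum>x\<in>E. exp (HH m x))" unfolding a_def using qpos by (simp add: divide_le_eq mult.commute)
    then show "exp a \<le> (\<Sum>x\<in>E. exp (HH m x))" using Epos by (metis exp_le_cancel_iff exp_ln)
  qed
  then have "a \<le> ln (Z m c)" by (metis exp_gt_zero exp_le_cancel_iff exp_ln less_le_trans)
  then show ?thesis unfolding a_def using qpos by (simp add: divide_le_eq mult.commute)
qed


lemma Kgood:
  assumes d: "\<delta> > 0"
  obtains e1 where "e1 > 0" "\<And>e. 0 < e \<Longrightarrow> e < e1 \<Longrightarrow> \<exists>M. \<forall>n\<ge>M. ln (K n e) \<le> real n * \<delta>"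
proof -
  have "eventually (\<lambda>e. limsup (\<lambda>n. ereal (ln (K n e) / real n)) < ereal \<delta>) (at_right 0)"
    using order_tendstoD(2)[OF Klim] d by simp
  then obtain b where b: "b > 0" "\<And>e. e > 0 \<Longrightarrow> e < b \<Longrightarrow> limsup (\<lambda>n. ereal (ln (K n e) / real n)) < ereal \<delta>"
    unfolding eventually_at_right_field by auto
  have "\<exists>M. \<forall>n\<ge>M. ln (K n e) \<le> real n * \<delta>" if e: "0 < e" "e < b" for e
  proof -
    define X where "X = (\<lambda>n. ereal (ln (K n e) / real n))"
    have "limsup X \<le> limsup X" by simp
    then have "\<forall>y > limsup X. eventually (\<lambda>n. y > X n) sequentially"
      by (subst (asm) Limsup_le_iff)
    then have "eventually (\<lambda>n. ereal \<delta> > X n) sequentially" using b(2)[OF e] unfolding X_def by blast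
    then obtain M where M: "\<And>n. n \<ge> M \<Longrightarrow> ln (K n e) / real n < \<delta>"
      unfolding X_def by (auto simp: eventually_sequentially)
    have "ln (K n e) \<le> real n * \<delta>" if n: "n \<ge> Suc M" for n
    proof -
      have "ln (K n e) / real n < \<delta>" using M n by simp
      moreover have "real n > 0" using n by simp
      ultimately show ?thesis by (simp add: divide_less_eq mult.commute)
    qed
    then show ?thesis by blast
  qed
  then show ?thesis using that b(1) by blast
qed

lemma lnK_nonneg: "n \<ge> 1 \<Longrightarrow> e > 0 \<Longrightarrow> ln (K n e) \<ge> 0"
  using Kge by simp

lemma Fint_pos: "(\<integral>y. exp (F n y) \<partial>P) > 0" by (rule exp_int_pos[OF Fb])

lemma upper_ln:
  assumes n: "n \<ge> 1" and e: "e > 0" and var: "\<And>x y. y \<in> bowen_ball phi n x e \<Longrightarrow> \<bar>F n y - F n x\<bar> \<le> V"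
  shows "ln (\<integral>y. exp (F n y) \<partial>P) \<le> ln (K n e) + V - real n * p + ln (Z n e)" "Z n e > 0"
proof -
  show Zp: "Z n e > 0" by (rule upper_Z(2)[OF n e var])
  have Kp: "K n e > 0" using Kge[OF n e] by simp
  have "ln (\<integral>y. exp (F n y) \<partial>P) \<le> ln (K n e * exp (V - real n * p) * Z n e)"
    using upper_Z(1)[OF n e var] Fint_pos[of n] by (rule ln_mono)
  also have "\<dots> = ln (K n e) + V - real n * p + ln (Z n e)" using Kp Zp by (simp add: ln_mult)
  finally show "ln (\<integral>y. exp (F n y) \<partial>P) \<le> ln (K n e) + V - real n * p + ln (Z n e)" .
qed

lemma lower_ln:
  assumes n: "n \<ge> 1" and e: "e > 0" and var: "\<And>x y. y \<in> bowen_ball phi n x e \<Longrightarrow> \<bar>F n y - F n x\<bar> \<le> V"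
    and Zp: "Z n (2*e) > 0"
  shows "ln (Z n (2*e)) \<le> ln (K n e) + V + real n * p + ln (\<integral>y. exp (F n y) \<partial>P)"
proof -
  have Kp: "K n e > 0" using Kge[OF n e] by simp
  have "ln (Z n (2*e)) \<le> ln (K n e * exp (V + real n * p) * (\<integral>y. exp (F n y) \<partial>P))"
    using lower_Z[OF n e var] Zp by (rule ln_mono)
  also have "\<dots> = ln (K n e) + V + real n * p + ln (\<integral>y. exp (F n y) \<partial>P)" using Kp Fint_pos[of n] by (simp add: ln_mult)
  finally show ?thesis .
qed


lemma F_pack:
  assumes FA: "class_A phi F" and d: "\<delta> > 0"
  obtains g C N d where "d > 0" "\<And>z. \<bar>g z\<bar> \<le> C" "\<And>n x. n \<ge> N \<Longrightarrow> \<bar>F n x - birkhoff_sum phi g n x\<bar> \<le> real n * \<delta>"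
    "\<And>n x y e. n \<ge> N \<Longrightarrow> e \<le> d \<Longrightarrow> y \<in> bowen_ball phi n x e \<Longrightarrow> \<bar>F n y - F n x\<bar> \<le> real n * (3 * \<delta>)"
proof -
  obtain g N where g: "continuous_on UNIV g" and ap: "\<And>n x. n \<ge> N \<Longrightarrow> \<bar>F n x - birkhoff_sum phi g n x\<bar> \<le> real n * \<delta>"
    using classA_approx[OF FA d] by blast
  obtain C where C: "\<And>z. \<bar>g z\<bar> \<le> C" using cont_bounded[OF g] by blast
  obtain dd where dd: "dd > 0" and v: "\<And>n x y e. e \<le> dd \<Longrightarrow> y \<in> bowen_ball phi n x e \<Longrightarrow>
     \<bar>birkhoff_sum phi g n y - birkhoff_sum phi g n x\<bar> \<le> real n * \<delta>"
    using bsum_var[OF g d] by blast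
  have "\<bar>F n y - F n x\<bar> \<le> real n * (3 * \<delta>)" if "n \<ge> N" "e \<le> dd" "y \<in> bowen_ball phi n x e" for n x y e
    using ap[OF that(1), of x] ap[OF that(1), of y] v[OF that(2,3)] by (simp add: abs_le_iff)
  then show ?thesis using that dd C ap by blast
qed

lemma close:
  assumes FA: "class_A phi F" and d: "\<delta> > 0"
  shows "\<exists>e0>0. \<forall>e. 0 < e \<and> e < e0 \<longrightarrow>
    eventually (\<lambda>n. \<bar>ln (\<integral>y. exp (F n y) \<partial>P) / real n + p - ln (Z n e) / real n\<bar> \<le> \<delta>) sequentially"
proof -
  define \<delta>' where "\<delta>' = \<delta> / 4"
  have d': "\<delta>' > 0" using d by (simp add: \<delta>'_def)
  obtain g C N dd where dd: "dd > 0"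
    and varF: "\<And>n x y e. n \<ge> N \<Longrightarrow> e \<le> dd \<Longrightarrow> y \<in> bowen_ball phi n x e \<Longrightarrow> \<bar>F n y - F n x\<bar> \<le> real n * (3 * \<delta>')"
    using F_pack[OF FA d'] by metis
  obtain e1 where e1: "e1 > 0" "\<And>e. 0 < e \<Longrightarrow> e < e1 \<Longrightarrow> \<exists>M. \<forall>n\<ge>M. ln (K n e) \<le> real n * \<delta>'"
    using Kgood[OF d'] by blast
  define e0 where "e0 = min dd e1"
  have "eventually (\<lambda>n. \<bar>ln (\<integral>y. exp (F n y) \<partial>P) / real n + p - ln (Z n e) / real n\<bar> \<le> \<delta>) sequentially"
    if e: "0 < e" "e < e0" for e
  proof -
    obtain M1 where M1: "\<And>n. n \<ge> M1 \<Longrightarrow> ln (K n e) \<le> real n * \<delta>'" using e1(2)[of e] e unfolding e0_def by auto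
    obtain M2 where M2: "\<And>n. n \<ge> M2 \<Longrightarrow> ln (K n (e/2)) \<le> real n * \<delta>'" using e1(2)[of "e/2"] e unfolding e0_def by auto
    have "\<bar>ln (\<integral>y. exp (F n y) \<partial>P) / real n + p - ln (Z n e) / real n\<bar> \<le> \<delta>"
      if n: "n \<ge> max (max N 1) (max M1 M2)" for n
    proof -
      have n1: "n \<ge> 1" and nN: "n \<ge> N" using n by auto
      have eh: "e/2 > 0" "e/2 \<le> dd" "e \<le> dd" using e unfolding e0_def by auto
      have vare: "\<And>x y. y \<in> bowen_ball phi n x e \<Longrightarrow> \<bar>F n y - F n x\<bar> \<le> real n * (3 * \<delta>')"
        using varF[OF nN eh(3)] by blast
      have vare2: "\<And>x y. y \<in> bowen_ball phi n x (e/2) \<Longrightarrow> \<bar>F n y - F n x\<bar> \<le> real n * (3 * \<delta>')"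
        using varF[OF nN eh(2)] by blast
      have U: "ln (\<integral>y. exp (F n y) \<partial>P) \<le> ln (K n e) + real n * (3 * \<delta>') - real n * p + ln (Z n e)"
        and Zp: "Z n e > 0" using upper_ln[OF n1 e(1) vare] by auto
      have Zp2: "Z n (2*(e/2)) > 0" using Zp by simp
      have L: "ln (Z n (2*(e/2))) \<le> ln (K n (e/2)) + real n * (3 * \<delta>') + real n * p + ln (\<integral>y. exp (F n y) \<partial>P)"
        by (rule lower_ln[OF n1 eh(1) vare2 Zp2])
      have K1: "ln (K n e) \<le> real n * \<delta>'" using M1 n by auto
      have K2: "ln (K n (e/2)) \<le> real n * \<delta>'" using M2 n by auto
      define X where "X = ln (\<integral>y. exp (F n y) \<partial>P) + real n * p - ln (Z n e)"
      define w where "w = real n * \<delta>'"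
      have w3: "real n * (3 * \<delta>') = 3 * w" unfolding w_def by simp
      have X4: "\<bar>X\<bar> \<le> 4 * w"
        using U L K1 K2 Zp unfolding X_def w3 by (simp only: flip: w_def) (simp add: abs_le_iff)
      have X: "\<bar>X\<bar> \<le> \<delta> * real n" using X4 unfolding w_def \<delta>'_def by (simp add: mult.commute)
      have np: "real n > 0" using n1 by simp
      have eq: "ln (\<integral>y. exp (F n y) \<partial>P) / real n + p - ln (Z n e) / real n = X / real n"
        unfolding X_def using np by (simp add: field_simps)
      have "\<bar>X / real n\<bar> = \<bar>X\<bar> / real n" using np by simp
      also have "\<dots> \<le> \<delta>" using X np by (simp add: pos_divide_le_eq)
      finally show ?thesis unfolding eq .
    qed
    then show ?thesis unfolding eventually_sequentially by blast
  qed
  moreover have "e0 > 0" using dd e1(1) unfolding e0_def by simp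
  ultimately show ?thesis by blast
qed


lemma bnd:
  assumes FA: "class_A phi F"
  shows "\<exists>C N. \<forall>n\<ge>N. \<bar>ln (\<integral>y. exp (F n y) \<partial>P) / real n\<bar> \<le> C"
proof -
  obtain g C N d where C: "\<And>z. \<bar>g z\<bar> \<le> C" and ap: "\<And>n x. n \<ge> N \<Longrightarrow> \<bar>F n x - birkhoff_sum phi g n x\<bar> \<le> real n * 1"
    using F_pack[OF FA zero_less_one] by metis
  have "\<bar>ln (\<integral>y. exp (F n y) \<partial>P) / real n\<bar> \<le> C + 1" if n: "n \<ge> max N 1" for n
  proof -
    have nN: "n \<ge> N" and np: "real n > 0" using n by auto
    have bF: "\<bar>F n x\<bar> \<le> real n * (C + 1)" for x
      using ap[OF nN, of x] bsum_bound[where g=g and C=C and n=n and x=x, OF C] by (simp add: algebra_simps abs_le_iff) 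
    have bF1: "- (real n * (C + 1)) \<le> F n x" for x using bF[of x] unfolding abs_le_iff by linarith
    have bF2: "F n x \<le> real n * (C + 1)" for x using bF[of x] unfolding abs_le_iff by linarith
    have lo: "exp (- (real n * (C + 1))) \<le> (\<integral>y. exp (F n y) \<partial>P)"
      by (rule exp_int_bounds(1)[OF Fb bF1 bF2])
    have hi: "(\<integral>y. exp (F n y) \<partial>P) \<le> exp (real n * (C + 1))"
      by (rule exp_int_bounds(2)[OF Fb bF1 bF2])
    have "- (real n * (C + 1)) \<le> ln (\<integral>y. exp (F n y) \<partial>P)"
      using ln_mono[OF lo] by simp
    moreover have "ln (\<integral>y. exp (F n y) \<partial>P) \<le> real n * (C + 1)"
      using ln_mono[OF hi Fint_pos] by simp
    ultimately have "\<bar>ln (\<integral>y. exp (F n y) \<partial>P)\<bar> \<le> (C + 1) * real n" by (simp add: abs_le_iff mult.commute)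
    then show ?thesis using np by (simp add: pos_divide_le_eq)
  qed
  then show ?thesis by blast
qed


lemma sub_step:
  assumes varF: "\<And>n x y e. n \<ge> N \<Longrightarrow> e \<le> 2*c0 \<Longrightarrow> y \<in> bowen_ball phi n x e \<Longrightarrow> \<bar>F n y - F n x\<bar> \<le> real n * (3 * \<delta>)"
    and approxH: "\<And>n x. n \<ge> N \<Longrightarrow> \<bar>HH n x - birkhoff_sum phi h n x\<bar> \<le> real n * \<delta>"
    and varh: "\<And>x y. y \<in> bowen_ball phi m x c0 \<Longrightarrow> \<bar>birkhoff_sum phi h m y - birkhoff_sum phi h m x\<bar> \<le> real m * \<delta>"
    and K1: "\<And>n. n \<ge> N \<Longrightarrow> ln (K n (2*c0)) \<le> real n * \<delta>"
    and K2: "\<And>n. n \<ge> N \<Longrightarrow> ln (K n (c0/2)) \<le> real n * \<delta>"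
    and m: "m \<ge> N" "m \<ge> 1" and q: "q \<ge> 1" and c0: "c0 > 0"
  shows "ln (\<integral>y. exp (F (q*m) y) \<partial>P) \<le> real q * ln (\<integral>y. exp (F m y) \<partial>P) + 11 * (real q * (real m * \<delta>))"
proof -
  have qm: "q*m \<ge> N" "q*m \<ge> 1" using m q by (metis le_trans mult_le_mono1 mult_1, simp)
  have c2: "2*c0 > 0" "c0/2 > 0" "c0 \<le> 2*c0" "c0/2 \<le> 2*c0" using c0 by auto
  have vqm: "\<And>x y. y \<in> bowen_ball phi (q*m) x (2*c0) \<Longrightarrow> \<bar>F (q*m) y - F (q*m) x\<bar> \<le> real (q*m) * (3 * \<delta>)"
    using varF[OF qm(1)] by blast
  have U: "ln (\<integral>y. exp (F (q*m) y) \<partial>P) \<le> ln (K (q*m) (2*c0)) + real (q*m) * (3 * \<delta>) - real (q*m) * p + ln (Z (q*m) (2*c0))"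
    and Zp: "Z (q*m) (2*c0) > 0" using upper_ln[OF qm(2) c2(1) vqm] by auto
  have B: "ln (Z (q*m) (2*c0)) \<le> 3 * real q * real m * \<delta> + real q * ln (Z m c0)"
    by (rule block_log[OF approxH varh m q c0 Zp])
  have vm: "\<And>x y. y \<in> bowen_ball phi m x c0 \<Longrightarrow> \<bar>F m y - F m x\<bar> \<le> real m * (3 * \<delta>)"
    using varF[OF m(1) c2(3)] by blast
  have vm2: "\<And>x y. y \<in> bowen_ball phi m x (c0/2) \<Longrightarrow> \<bar>F m y - F m x\<bar> \<le> real m * (3 * \<delta>)"
    using varF[OF m(1) c2(4)] by blast
  have Zm: "Z m (2*(c0/2)) > 0" using upper_ln(2)[OF m(2) c0 vm] by simp
  have L: "ln (Z m (2*(c0/2))) \<le> ln (K m (c0/2)) + real m * (3 * \<delta>) + real m * p + ln (\<integral>y. exp (F m y) \<partial>P)"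
    by (rule lower_ln[OF m(2) c2(2) vm2 Zm])
  have L': "ln (Z m c0) \<le> real m * \<delta> + real m * (3 * \<delta>) + real m * p + ln (\<integral>y. exp (F m y) \<partial>P)"
  proof -
    have e3: "real m * (3 * \<delta>) = 3 * (real m * \<delta>)" by simp
    have e2: "2 * (c0 / 2) = c0" by simp
    show ?thesis using L K2[OF m(1)] unfolding e3 e2 by linarith
  qed
  have Lq: "real q * ln (Z m c0) \<le> real q * (real m * \<delta> + real m * (3 * \<delta>) + real m * p + ln (\<integral>y. exp (F m y) \<partial>P))"
    using L' by (intro mult_left_mono) auto
  have K1': "ln (K (q*m) (2*c0)) \<le> real q * (real m * \<delta>)" using K1[OF qm(1)] by simp
  define a where "a = real q * (real m * \<delta>)"
  define b where "b = real q * (real m * p)"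
  define lZ where "lZ = ln (Z m c0)"
  define lI where "lI = ln (\<integral>y. exp (F m y) \<partial>P)"
  have U': "ln (\<integral>y. exp (F (q*m) y) \<partial>P) \<le> ln (K (q*m) (2*c0)) + 3 * a - b + ln (Z (q*m) (2*c0))"
    using U unfolding a_def b_def by (simp add: algebra_simps)
  have B': "ln (Z (q*m) (2*c0)) \<le> 3 * a + real q * lZ" using B unfolding a_def lZ_def by (simp add: algebra_simps)
  have Lq': "real q * lZ \<le> a + 3 * a + b + real q * lI" using Lq unfolding a_def b_def lZ_def lI_def by (simp add: algebra_simps)
  have "ln (\<integral>y. exp (F (q*m) y) \<partial>P) \<le> real q * lI + 11 * a" using U' B' Lq' K1'[folded a_def] by linarith
  then show ?thesis unfolding a_def lI_def .
qed

lemma shift_step: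
  assumes ap: "\<And>n x. n \<ge> N \<Longrightarrow> \<bar>F n x - birkhoff_sum phi g n x\<bar> \<le> real n * \<delta>"
    and C: "\<And>z. \<bar>g z\<bar> \<le> C" and m: "m \<ge> N" "m \<ge> 1" and n: "n \<ge> m" and d: "\<delta> > 0"
  shows "ln (\<integral>y. exp (F n y) \<partial>P) \<le> ln (\<integral>y. exp (F (n div m * m) y) \<partial>P) + real m * C + 2 * (real n * \<delta>)"
proof -
  define q where "q = n div m"
  define r where "r = n mod m"
  have nqr: "n = q*m + r" unfolding q_def r_def by simp
  have rm: "r < m" unfolding r_def using m by simp
  have q1: "q \<ge> 1" unfolding q_def using div_le_mono[OF n, of m] m by simp
  have qmN: "q*m \<ge> N" using m q1 by (metis le_trans mult_le_mono1 mult_1)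
  have nN: "n \<ge> N" using m n by simp
  have Cnn: "C \<ge> 0" using C[of undefined] by simp
  have pt: "F n x \<le> F (q*m) x + (real m * C + 2 * (real n * \<delta>))" for x
  proof -
    have s: "birkhoff_sum phi g n x = birkhoff_sum phi g (q*m) x + birkhoff_sum phi g r ((phi ^^ (q*m)) x)"
      unfolding nqr by (rule bsum_add)
    have b: "\<bar>birkhoff_sum phi g r ((phi ^^ (q*m)) x)\<bar> \<le> real r * C"
      by (rule bsum_bound[where g=g and C=C, OF C])
    have "real r * C \<le> real m * C" using rm Cnn by (intro mult_right_mono) auto
    moreover have "real (q*m) * \<delta> \<le> real n * \<delta>" using nqr d by (intro mult_right_mono) auto
    ultimately show ?thesis using ap[OF nN, of x] ap[OF qmN, of x] s b by (simp add: abs_le_iff)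
  qed
  define k where "k = real m * C + 2 * (real n * \<delta>)"
  have "(\<integral>y. exp (F n y) \<partial>P) \<le> (\<integral>y. exp k * exp (F (q*m) y) \<partial>P)"
  proof (rule integral_mono)
    show "integrable P (\<lambda>y. exp (F n y))" by (rule exp_int[OF Fb])
    show "integrable P (\<lambda>y. exp k * exp (F (q*m) y))" using exp_int[OF Fb] by simp
    fix y show "exp (F n y) \<le> exp k * exp (F (q*m) y)" using pt[of y] unfolding k_def by (simp add: exp_add[symmetric])
  qed
  also have "\<dots> = exp k * (\<integral>y. exp (F (q*m) y) \<partial>P)" by simp
  finally have "ln (\<integral>y. exp (F n y) \<partial>P) \<le> ln (exp k * (\<integral>y. exp (F (q*m) y) \<partial>P))"
    using Fint_pos by (intro ln_mono) auto
  also have "\<dots> = k + ln (\<integral>y. exp (F (q*m) y) \<partial>P)" using Fint_pos[of "q*m"] by (simp add: ln_mult)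
  finally show ?thesis unfolding k_def q_def by simp
qed


lemma fek:
  assumes FA: "class_A phi F"
    and HA: "\<And>\<delta>. \<delta> > 0 \<Longrightarrow> \<exists>h N. continuous_on UNIV h \<and> (\<forall>n\<ge>N. \<forall>x. \<bar>HH n x - birkhoff_sum phi h n x\<bar> \<le> real n * \<delta>)"
    and d: "\<delta> > 0"
  shows "\<exists>N. \<forall>m\<ge>N. eventually (\<lambda>n. ln (\<integral>y. exp (F n y) \<partial>P) / real n \<le> ln (\<integral>y. exp (F m y) \<partial>P) / real m + \<delta>) sequentially"
proof -
  define \<delta>' where "\<delta>' = \<delta> / 14"
  have d': "\<delta>' > 0" using d by (simp add: \<delta>'_def)
  obtain g C N1 d1 where d1: "d1 > 0" and C: "\<And>z. \<bar>g z\<bar> \<le> C"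
    and apF: "\<And>n x. n \<ge> N1 \<Longrightarrow> \<bar>F n x - birkhoff_sum phi g n x\<bar> \<le> real n * \<delta>'"
    and varF: "\<And>n x y e. n \<ge> N1 \<Longrightarrow> e \<le> d1 \<Longrightarrow> y \<in> bowen_ball phi n x e \<Longrightarrow> \<bar>F n y - F n x\<bar> \<le> real n * (3 * \<delta>')"
    using F_pack[OF FA d'] by metis
  obtain h N2 where h: "continuous_on UNIV h" and apH: "\<And>n x. n \<ge> N2 \<Longrightarrow> \<bar>HH n x - birkhoff_sum phi h n x\<bar> \<le> real n * \<delta>'"
    using HA[OF d'] by blast
  obtain d2 where d2: "d2 > 0" and varh: "\<And>n x y e. e \<le> d2 \<Longrightarrow> y \<in> bowen_ball phi n x e \<Longrightarrow>
     \<bar>birkhoff_sum phi h n y - birkhoff_sum phi h n x\<bar> \<le> real n * \<delta>'"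
    using bsum_var[OF h d'] by blast
  obtain e1 where e1: "e1 > 0" "\<And>e. 0 < e \<Longrightarrow> e < e1 \<Longrightarrow> \<exists>M. \<forall>n\<ge>M. ln (K n e) \<le> real n * \<delta>'"
    using Kgood[OF d'] by blast
  define c0 where "c0 = min (d1/2) (min d2 (e1/4))"
  have c0: "c0 > 0" "2*c0 \<le> d1" "c0 \<le> d2" "2*c0 < e1" "c0/2 < e1"
    using d1 d2 e1(1) unfolding c0_def by auto
  obtain M1 where M1: "\<And>n. n \<ge> M1 \<Longrightarrow> ln (K n (2*c0)) \<le> real n * \<delta>'" using e1(2)[of "2*c0"] c0 by auto
  obtain M2 where M2: "\<And>n. n \<ge> M2 \<Longrightarrow> ln (K n (c0/2)) \<le> real n * \<delta>'" using e1(2)[of "c0/2"] c0 by auto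
  define N where "N = max (max N1 N2) (max (max M1 M2) 1)"
  have varF': "\<And>n x y e. n \<ge> N \<Longrightarrow> e \<le> 2*c0 \<Longrightarrow> y \<in> bowen_ball phi n x e \<Longrightarrow> \<bar>F n y - F n x\<bar> \<le> real n * (3 * \<delta>')"
    using varF c0(2) unfolding N_def by (meson max.boundedE order_trans)
  have apH': "\<And>n x. n \<ge> N \<Longrightarrow> \<bar>HH n x - birkhoff_sum phi h n x\<bar> \<le> real n * \<delta>'"
    using apH unfolding N_def by simp
  have K1: "\<And>n. n \<ge> N \<Longrightarrow> ln (K n (2*c0)) \<le> real n * \<delta>'" using M1 unfolding N_def by simp
  have K2: "\<And>n. n \<ge> N \<Longrightarrow> ln (K n (c0/2)) \<le> real n * \<delta>'" using M2 unfolding N_def by simp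
  have "eventually (\<lambda>n. ln (\<integral>y. exp (F n y) \<partial>P) / real n \<le> ln (\<integral>y. exp (F m y) \<partial>P) / real m + \<delta>) sequentially"
    if m: "m \<ge> N" for m
  proof -
    have m1: "m \<ge> 1" and mN1: "m \<ge> N1" using m unfolding N_def by auto
    have vh: "\<And>x y. y \<in> bowen_ball phi m x c0 \<Longrightarrow> \<bar>birkhoff_sum phi h m y - birkhoff_sum phi h m x\<bar> \<le> real m * \<delta>'"
      using varh c0(3) by blast
    define Am where "Am = ln (\<integral>y. exp (F m y) \<partial>P)"
    obtain n0 :: nat where n0: "real m * (\<bar>Am / real m\<bar> + \<bar>C\<bar>) < real n0 * \<delta>'"
      using ex_less_of_nat_mult[OF d'] by blast
    have "ln (\<integral>y. exp (F n y) \<partial>P) / real n \<le> Am / real m + \<delta>" if n: "n \<ge> max m n0" for n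
    proof -
      define q where "q = n div m"
      have nm: "n \<ge> m" using n by simp
      have q1: "q \<ge> 1" unfolding q_def using div_le_mono[OF nm, of m] m1 by simp
      have S: "ln (\<integral>y. exp (F (q*m) y) \<partial>P) \<le> real q * Am + 11 * (real q * (real m * \<delta>'))"
        unfolding Am_def by (rule sub_step[OF varF' apH' vh K1 K2 m m1 q1 c0(1)])
      have T: "ln (\<integral>y. exp (F n y) \<partial>P) \<le> ln (\<integral>y. exp (F (q*m) y) \<partial>P) + real m * C + 2 * (real n * \<delta>')"
        unfolding q_def by (rule shift_step[OF apF C mN1 m1 nm d'])
      have qm1: "q * m \<le> n" unfolding q_def by simp
      have qm2: "n < q * m + m" unfolding q_def using m1 by (metis add.commute div_mult_mod_eq mod_less_divisor nat_add_left_cancel_less le_less_trans less_one not_le)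
      have rq: "real q * real m \<le> real n" "real n < real q * real m + real m"
        using qm1 qm2 by (simp_all add: of_nat_mult[symmetric] del: of_nat_mult)
      have big: "real m * (\<bar>Am / real m\<bar> + \<bar>C\<bar>) \<le> real n * \<delta>'"
      proof -
        have "real n0 * \<delta>' \<le> real n * \<delta>'" using n d' by (intro mult_right_mono) auto
        then show ?thesis using n0 by linarith
      qed
      have "ln (\<integral>y. exp (F n y) \<partial>P) / real n \<le> Am / real m + 14 * \<delta>'"
        by (rule arith_fek[OF _ rq]) (use S T big m1 d' n in \<open>auto\<close>)
      then show ?thesis unfolding \<delta>'_def by simp
    qed
    then show ?thesis unfolding eventually_sequentially Am_def by blast
  qed
  then show ?thesis by blast
qed


lemma gset_main:
  assumes FA: "class_A phi F"
    and HA: "\<And>\<delta>. \<delta> > 0 \<Longrightarrow> \<exists>h N. continuous_on UNIV h \<and> (\<forall>n\<ge>N. \<forall>x. \<bar>HH n x - birkhoff_sum phi h n x\<bar> \<le> real n * \<delta>)"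
  shows "(\<lambda>n. ereal (ln (\<integral>y. exp (F n y) \<partial>P) / real n))
    \<longlonglongrightarrow> Lim (at_right 0) (\<lambda>e. limsup (\<lambda>n. ereal (ln (Z n e) / real n))) - ereal p"
  by (rule abstract_limit[where c="\<lambda>n. ln (\<integral>y. exp (F n y) \<partial>P) / real n" and z="\<lambda>e n. ln (Z n e) / real n" and p=p,
        OF fek[OF FA HA] bnd[OF FA] close[OF FA]])

end


theorem lemma5p4:
  fixes phi :: "'a::metric_space \<Rightarrow> 'a"
    and G G' :: "nat \<Rightarrow> 'a \<Rightarrow> real"
    and P :: "'a measure"
  assumes "compact (UNIV :: 'a set)"
    and "continuous_on UNIV phi"
    and "top_entropy phi < \<infinity>"
    and "entropy_usc phi"
    and "class_A phi G"
    and "weak_gibbs phi G P"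
    and "class_A phi G'"
  shows "(\<lambda>n. ereal (ln (integral\<^sup>L P (\<lambda>x. exp (G' n x))) / real n))
           \<longlonglongrightarrow> pressure phi (\<lambda>n x. G n x + G' n x) - pressure phi G"
proof -
  note GA = assms(5) and WG = assms(6) and FA = assms(7)
  have bp: "borel_prob P" and fin: "\<bar>pressure phi G\<bar> \<noteq> \<infinity>" using WG by (auto simp: weak_gibbs_def)
  define p where "p = real_of_ereal (pressure phi G)"
  have pe: "pressure phi G = ereal p" unfolding p_def using fin by (cases "pressure phi G") auto
  obtain K :: "nat \<Rightarrow> real \<Rightarrow> real" where
    K1: "\<forall>n\<ge>1. \<forall>eps>0. K n eps \<ge> 1 \<and>
           (\<forall>x. exp (G n x - real n * p) / K n eps \<le> measure P (bowen_ball phi n x eps)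
              \<and> measure P (bowen_ball phi n x eps) \<le> K n eps * exp (G n x - real n * p))"
    and K2: "((\<lambda>eps. limsup (\<lambda>n. ereal (ln (K n eps) / real n))) \<longlongrightarrow> 0) (at_right 0)"
    using WG unfolding weak_gibbs_def p_def by blast
  have Fb: "\<And>n. bounded_borel (G' n)" using FA by (simp add: class_A_def)
  interpret gset phi P G G' p K
  proof (unfold_locales)
    show "compact (UNIV :: 'a set)" by fact
    show "continuous_on UNIV phi" by fact
    show "borel_prob P" by fact
  qed (use K1 K2 Fb in auto)
  have HA: "\<exists>h N. continuous_on UNIV h \<and> (\<forall>n\<ge>N. \<forall>x. \<bar>HH n x - birkhoff_sum phi h n x\<bar> \<le> real n * \<delta>)"
    if d: "\<delta> > 0" for \<delta>
  proof -
    have d2: "\<delta>/2 > 0" using d by simp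
    obtain g1 N1 where g1: "continuous_on UNIV g1" and a1: "\<And>n x. n \<ge> N1 \<Longrightarrow> \<bar>G n x - birkhoff_sum phi g1 n x\<bar> \<le> real n * (\<delta>/2)"
      using classA_approx[OF GA d2] by blast
    obtain g2 N2 where g2: "continuous_on UNIV g2" and a2: "\<And>n x. n \<ge> N2 \<Longrightarrow> \<bar>G' n x - birkhoff_sum phi g2 n x\<bar> \<le> real n * (\<delta>/2)"
      using classA_approx[OF FA d2] by blast
    have "\<bar>HH n x - birkhoff_sum phi (\<lambda>x. g1 x + g2 x) n x\<bar> \<le> real n * \<delta>" if n: "n \<ge> max N1 N2" for n x
    proof -
      have "\<bar>HH n x - birkhoff_sum phi (\<lambda>x. g1 x + g2 x) n x\<bar>
          = \<bar>(G n x - birkhoff_sum phi g1 n x) + (G' n x - birkhoff_sum phi g2 n x)\<bar>"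
        unfolding HH_def bsum_plus by (simp add: algebra_simps)
      also have "\<dots> \<le> real n * (\<delta>/2) + real n * (\<delta>/2)"
        using a1[of n x] a2[of n x] n by (intro order.trans[OF abs_triangle_ineq] add_mono) auto
      also have "\<dots> = real n * \<delta>" by (simp add: field_simps)
      finally show ?thesis .
    qed
    moreover have "continuous_on UNIV (\<lambda>x. g1 x + g2 x)" using g1 g2 by (intro continuous_on_add)
    ultimately show ?thesis by blast
  qed
  have main: "(\<lambda>n. ereal (ln (\<integral>y. exp (G' n y) \<partial>P) / real n))
    \<longlonglongrightarrow> Lim (at_right 0) (\<lambda>e. limsup (\<lambda>n. ereal (ln (Z n e) / real n))) - ereal p"
    by (rule gset_main[OF FA HA])
  have "Lim (at_right 0) (\<lambda>e. limsup (\<lambda>n. ereal (ln (Z n e) / real n))) = pressure phi (\<lambda>n x. G n x + G' n x)"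
    unfolding pressure_def Z_def HH_def by simp
  then show ?thesis using main pe by simp
qed

end
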